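(* Let $q$ be a prime power, $r$ a prime with $r\mid(q-1)$ and $r\ge3$, $q/2\le\ell\le q-1$, and $s\mid(q-1)/r$. Assume that every nonzero $f\in\mathbb{F}_q[X]$ of degree $<r$ satisfies $|f|+|\{x\in\Omega_r: f(x)\neq0\}|\geq r+1$, where $|f|$ is the number of nonzero coefficients of $f$ and $\Omega_r=\{x\in\mathbb{F}_q^*:x^r=1\}$. If $s\geq 2r^2$, then the folded quantum Tamo–Barg code with parameters $q,r,\ell,s$ has distance at least \[ \frac{q-1}{s}\left(1-\frac{\ell-1}{q-1}-\left(1+\frac{r^2}{s}\right)\sqrt{\frac{1}{r}\left(1-\frac{\ell-1}{q-1}\right)}\right). \]
   Context: $[n]=\{0,\dots,n-1\}$, $\mathbb{F}_q^*=\mathbb{F}_q\setminus\{0\}$. For $S\subseteq\mathbb{Z}_{\ge0}$, $\mathbb{F}_q[X]^S=\{\sum_{i\in S}a_iX^i\}$, $\mathrm{ev}(f)=(f(x))_{x\in\mathbb{F}_q^*}$. Let $S=\{i\in[\ell]:i\not\equiv r-1\pmod r\}\cup\{i\in[q-1]:i\equiv1\pmod r\}$, $C=\mathrm{ev}(\mathbb{F}_q[X]^S)$; for $\ell\ge q/2$, $C^\perp\subseteq C$ and the quantum Tamo–Barg code is $\mathrm{CSS}(C,C)$, qudits indexed by $\mathbb{F}_q^*$. Folding: fix a generator $\omega$ of $\mathbb{F}_q^*$ and for $i\in[(q-1)/s]$ group the $s$ positions $\{\omega^{si},\dots,\omega^{si+s-1}\}$ into one symbol of alphabet $\mathbb{F}_q^s$,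 giving the folded quantum Tamo–Barg code of block length $(q-1)/s$. Its distance is the minimum, over $c\in C\setminus C^\perp$, of the number of blocks on which $c$ is not identically zero. *)

theory Defs
  imports "HOL-Computational_Algebra.Polynomial" Complex_Main
begin

text \<open>Vectors indexed by F_q^* are represented as functions 'a => 'a that vanish at 0.\<close>

definition tb_index_set :: "nat \<Rightarrow> nat \<Rightarrow> nat \<Rightarrow> nat set" where
  "tb_index_set q r l = {i. i < l \<and> i mod r \<noteq> (r - 1) mod r} \<union> {i. i < q - 1 \<and> i mod r = 1 mod r}"

definition ev :: "'a::field poly \<Rightarrow> 'a \<Rightarrow> 'a" where
  "ev f = (\<lambda>x. if x = 0 then 0 else poly f x)"

definition tb_code :: "nat \<Rightarrow> nat \<Rightarrow> ('a::{finite,field} \<Rightarrow> 'a) set" where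
  "tb_code r l = {ev f | f. \<forall>i. coeff f i \<noteq> 0 \<longrightarrow> i \<in> tb_index_set (card (UNIV :: 'a set)) r l}"

definition dual_code :: "('a::{finite,field} \<Rightarrow> 'a) set \<Rightarrow> ('a \<Rightarrow> 'a) set" where
  "dual_code C = {d. d 0 = 0 \<and> (\<forall>c\<in>C. (\<Sum>x\<in>UNIV - {0}. c x * d x) = 0)}"

definition folded_weight :: "'a::{finite,field} \<Rightarrow> nat \<Rightarrow> ('a \<Rightarrow> 'a) \<Rightarrow> nat" where
  "folded_weight \<omega> s c = card {i. i < (card (UNIV :: 'a set) - 1) div s \<and> (\<exists>j<s. c (\<omega> ^ (s * i + j)) \<noteq> 0)}"

definition is_generator :: "'a::field \<Rightarrow> bool" where
  "is_generator \<omega> \<longleftrightarrow> \<omega> \<noteq> 0 \<and> (\<forall>x. x \<noteq> 0 \<longrightarrow> (\<exists>k::nat. x = \<omega> ^ k))"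

definition poly_sparsity :: "'a::zero poly \<Rightarrow> nat" where
  "poly_sparsity f = card {i. coeff f i \<noteq> 0}"

end

theory Submission
  imports Defs "Jordan_Normal_Form.Determinant"
begin
lemma ff_pow_card: 
  fixes x :: "'a::{finite,field}"
  assumes "x \<noteq> 0"
  shows "x ^ (card (UNIV :: 'a set) - 1) = 1"
proof -
  let ?U = "UNIV - {0::'a}"
  have fin: "finite ?U" by simp
  have bij: "bij_betw (\<lambda>y. x * y) ?U ?U"
    unfolding bij_betw_def
  proof
    show "inj_on ((*) x) ?U" using assms by (auto simp: inj_on_def)
    show "(*) x ` ?U = ?U"
    proof
      show "(*) x ` ?U \<subseteq> ?U" using assms by auto
      show "?U \<subseteq> (*) x ` ?U"
      proof
        fix y assume "y \<in> ?U"
        then have "y = x * (inverse x * y)" "inverse x * y \<in> ?U" using assms by (auto simp: field_simps)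
        then show "y \<in> (*) x ` ?U" by blast
      qed
    qed
  qed
  have "(\<Prod>y\<in>?U. x * y) = (\<Prod>y\<in>?U. y)"
    using prod.reindex_bij_betw[OF bij, of "\<lambda>y. y"] by simp
  moreover have "(\<Prod>y\<in>?U. x * y) = x ^ card ?U * (\<Prod>y\<in>?U. y)"
    by (simp add: prod.distrib)
  moreover have "(\<Prod>y\<in>?U. y) \<noteq> 0" by (simp add: fin)
  moreover have "card ?U = card (UNIV :: 'a set) - 1" by (simp add: card_Diff_subset)
  ultimately show ?thesis by (metis mult_cancel_right2)
qed

lemma gen_facts:
  fixes \<omega> :: "'a::{finite,field}"
  assumes gen: "is_generator \<omega>"
  defines "n0 \<equiv> card (UNIV :: 'a set) - 1"
  shows "\<omega> ^ n0 = 1" and "inj_on (\<lambda>k. \<omega> ^ k) {..<n0}" 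
    and "\<And>k. \<omega> ^ k = \<omega> ^ (k mod n0)"
    and "\<And>x. x \<noteq> 0 \<Longrightarrow> \<exists>k<n0. x = \<omega> ^ k"
    and "n0 > 0"
proof -
  have w0: "\<omega> \<noteq> 0" using gen by (simp add: is_generator_def)
  show p1: "\<omega> ^ n0 = 1" unfolding n0_def by (rule ff_pow_card[OF w0])
  have c2: "card (UNIV :: 'a set) \<ge> 2" 
  proof -
    have "{0::'a, 1} \<subseteq> UNIV" by simp
    then have "card {0::'a,1} \<le> card (UNIV :: 'a set)" by (rule card_mono[OF finite_UNIV])
    then show ?thesis by simp
  qed
  then show n0p: "n0 > 0" unfolding n0_def by simp
  show md: "\<And>k. \<omega> ^ k = \<omega> ^ (k mod n0)"
  proof -
    fix k
    have "\<omega> ^ k = \<omega> ^ (n0 * (k div n0) + k mod n0)" by simp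
    also have "\<dots> = (\<omega> ^ n0) ^ (k div n0) * \<omega> ^ (k mod n0)" by (simp only: power_add power_mult)
    finally show "\<omega> ^ k = \<omega> ^ (k mod n0)" using p1 by simp
  qed
  show ex: "\<And>x. x \<noteq> 0 \<Longrightarrow> \<exists>k<n0. x = \<omega> ^ k"
  proof -
    fix x :: 'a assume "x \<noteq> 0"
    then obtain k where "x = \<omega> ^ k" using gen by (auto simp: is_generator_def)
    then have "x = \<omega> ^ (k mod n0)" using md by simp
    then show "\<exists>k<n0. x = \<omega> ^ k" using n0p mod_less_divisor by blast
  qed
  have "(\<lambda>k. \<omega> ^ k) ` {..<n0} = UNIV - {0}"
  proof
    show "(\<lambda>k. \<omega> ^ k) ` {..<n0} \<subseteq> UNIV - {0}" using w0 by auto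
    show "UNIV - {0} \<subseteq> (\<lambda>k. \<omega> ^ k) ` {..<n0}" using ex by blast
  qed
  moreover have "card (UNIV - {0::'a}) = n0" unfolding n0_def by (simp add: card_Diff_subset)
  ultimately show "inj_on (\<lambda>k. \<omega> ^ k) {..<n0}"
    by (metis card_lessThan eq_card_imp_inj_on finite_lessThan)
qed

lemma gen_pow_eq_1:
  fixes \<omega> :: "'a::{finite,field}"
  assumes gen: "is_generator \<omega>"
  shows "\<omega> ^ k = 1 \<longleftrightarrow> (card (UNIV :: 'a set) - 1) dvd k"
proof -
  let ?n0 = "card (UNIV :: 'a set) - 1"
  note G = gen_facts[OF gen]
  show ?thesis
  proof
    assume "\<omega> ^ k = 1"
    then have "\<omega> ^ (k mod ?n0) = \<omega> ^ 0" using G(3) by (metis power_0)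
    moreover have "k mod ?n0 < ?n0" "0 < ?n0" using G(5) by auto
    ultimately have "k mod ?n0 = 0" using G(2) by (metis inj_on_def lessThan_iff)
    then show "?n0 dvd k" by auto
  next
    assume "?n0 dvd k"
    then obtain m where "k = ?n0 * m" by auto
    then show "\<omega> ^ k = 1" using G(1) by (simp add: power_mult)
  qed
qed

lemma sum_pow_zero:
  fixes \<omega> :: "'a::{finite,field}"
  assumes gen: "is_generator \<omega>" and nd: "\<not> (card (UNIV :: 'a set) - 1) dvd k"
  shows "(\<Sum>x\<in>UNIV - {0::'a}. x ^ k) = 0"
proof -
  let ?U = "UNIV - {0::'a}"
  have w0: "\<omega> \<noteq> 0" using gen by (simp add: is_generator_def)
  have bij: "bij_betw (\<lambda>y. \<omega> * y) ?U ?U"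
    unfolding bij_betw_def
  proof
    show "inj_on ((*) \<omega>) ?U" using w0 by (auto simp: inj_on_def)
    show "(*) \<omega> ` ?U = ?U"
    proof
      show "(*) \<omega> ` ?U \<subseteq> ?U" using w0 by auto
      show "?U \<subseteq> (*) \<omega> ` ?U"
      proof
        fix y assume "y \<in> ?U"
        then have "y = \<omega> * (inverse \<omega> * y)" "inverse \<omega> * y \<in> ?U" using w0 by (auto simp: field_simps)
        then show "y \<in> (*) \<omega> ` ?U" by blast
      qed
    qed
  qed
  have "(\<Sum>y\<in>?U. (\<omega> * y) ^ k) = (\<Sum>y\<in>?U. y ^ k)"
    using sum.reindex_bij_betw[OF bij, of "\<lambda>y. y ^ k"] by simp
  moreover have "(\<Sum>y\<in>?U. (\<omega> * y) ^ k) = \<omega> ^ k * (\<Sum>y\<in>?U. y ^ k)"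
    by (simp add: power_mult_distrib sum_distrib_left)
  moreover have "\<omega> ^ k \<noteq> 1" using gen_pow_eq_1[OF gen] nd by simp
  ultimately show ?thesis
    by (metis (no_types, lifting) add_diff_cancel_right' diff_add_cancel mult_cancel_right1 right_minus_eq)
qed


definition cls :: "nat \<Rightarrow> nat \<Rightarrow> 'a::comm_ring_1 poly \<Rightarrow> 'a poly" where
  "cls r a f = (\<Sum>i\<le>degree f. if i mod r = a then monom (coeff f i) i else 0)"

lemma coeff_cls: "coeff (cls r a f) k = (if k mod r = a then coeff f k else 0)"
proof (cases "k \<le> degree f")
  case True
  have "coeff (cls r a f) k = (\<Sum>i\<le>degree f. if i = k then (if k mod r = a then coeff f k else 0) else 0)"
    unfolding cls_def coeff_sum by (intro sum.cong) (auto simp: coeff_monom)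
  also have "\<dots> = (if k mod r = a then coeff f k else 0)" using True by simp
  finally show ?thesis .
next
  case False
  then have "coeff f k = 0" by (simp add: coeff_eq_0)
  moreover have "coeff (cls r a f) k = 0"
    unfolding cls_def coeff_sum using False by (intro sum.neutral) (auto simp: coeff_monom)
  ultimately show ?thesis by simp
qed

lemma sum_cls: assumes "r > 0" shows "(\<Sum>a<r. cls r a f) = f"
proof (rule poly_eqI)
  fix k
  have "coeff (\<Sum>a<r. cls r a f) k = (\<Sum>a<r. if a = k mod r then coeff f k else 0)"
    unfolding coeff_sum coeff_cls by (intro sum.cong) auto
  also have "\<dots> = coeff f k" using assms by simp
  finally show "coeff (\<Sum>a<r. cls r a f) k = coeff f k" .
qed

lemma poly_cls_mult:
  fixes z x :: "'a::comm_ring_1"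
  assumes "z ^ r = 1"
  shows "poly (cls r a f) (z * x) = z ^ a * poly (cls r a f) x"
proof -
  let ?p = "cls r a f"
  have "poly ?p (z * x) = (\<Sum>i\<le>degree ?p. coeff ?p i * (z * x) ^ i)" by (rule poly_altdef)
  also have "\<dots> = (\<Sum>i\<le>degree ?p. z ^ a * (coeff ?p i * x ^ i))"
  proof (intro sum.cong refl)
    fix i
    show "coeff ?p i * (z * x) ^ i = z ^ a * (coeff ?p i * x ^ i)"
    proof (cases "i mod r = a")
      case True
      have "z ^ i = z ^ (r * (i div r) + i mod r)" by simp
      also have "\<dots> = (z ^ r) ^ (i div r) * z ^ (i mod r)" by (simp only: power_add power_mult)
      finally have "z ^ i = z ^ a" using True assms by simp
      then show ?thesis by (simp add: power_mult_distrib)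
    next
      case False
      then show ?thesis by (simp add: coeff_cls)
    qed
  qed
  also have "\<dots> = z ^ a * poly ?p x" by (simp add: poly_altdef sum_distrib_left)
  finally show ?thesis .
qed

definition fib :: "nat \<Rightarrow> 'a::comm_ring_1 poly \<Rightarrow> 'a \<Rightarrow> 'a poly" where
  "fib r f x = (\<Sum>a<r. monom (poly (cls r a f) x) a)"

lemma coeff_fib: "coeff (fib r f x) k = (if k < r then poly (cls r k f) x else 0)"
  unfolding fib_def coeff_sum by (simp add: coeff_monom)

lemma degree_fib: assumes "r > 0" shows "degree (fib r f x) < r"
proof -
  have "degree (fib r f x) \<le> r - 1"
    by (rule degree_le) (auto simp: coeff_fib)
  then show ?thesis using assms by simp
qed

lemma poly_fib:
  fixes z x :: "'a::comm_ring_1"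
  assumes "z ^ r = 1" "r > 0"
  shows "poly (fib r f x) z = poly f (z * x)"
proof -
  have "poly (fib r f x) z = (\<Sum>a<r. poly (cls r a f) x * z ^ a)"
    unfolding fib_def by (simp add: poly_sum poly_monom)
  also have "\<dots> = (\<Sum>a<r. poly (cls r a f) (z * x))"
    using poly_cls_mult[OF assms(1)] by (simp add: mult.commute)
  also have "\<dots> = poly (\<Sum>a<r. cls r a f) (z * x)" by (simp add: poly_sum)
  also have "\<dots> = poly f (z * x)" by (subst sum_cls[OF assms(2)]) (rule refl)
  finally show ?thesis .
qed

lemma sparsity_fib: "poly_sparsity (fib r f x) \<le> card {a. a < r \<and> poly (cls r a f) x \<noteq> 0}"
  unfolding poly_sparsity_def
  by (rule card_mono) (auto simp: coeff_fib split: if_splits)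

locale tbsetup =
  fixes \<omega> :: "'a::{finite,field}" and r :: nat
  assumes gen: "is_generator \<omega>" and rdvd: "r dvd (card (UNIV::'a set) - 1)" and r3: "r \<ge> 3"
  and sparse: "\<And>f :: 'a poly. f \<noteq> 0 \<Longrightarrow> degree f < r \<Longrightarrow>
        poly_sparsity f + card {x. x \<noteq> 0 \<and> x ^ r = 1 \<and> poly f x \<noteq> 0} \<ge> r + 1"
begin

definition "n0 = card (UNIV::'a set) - 1"
definition "\<zeta> = \<omega> ^ (n0 div r)"

lemma n0_pos: "n0 > 0" using gen_facts(5)[OF gen] unfolding n0_def .
lemma om_n0: "\<omega> ^ n0 = 1" using gen_facts(1)[OF gen] unfolding n0_def .
lemma om_mod: "\<omega> ^ k = \<omega> ^ (k mod n0)" using gen_facts(3)[OF gen] unfolding n0_def .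
lemma om_inj: "inj_on (\<lambda>k. \<omega> ^ k) {..<n0}" using gen_facts(2)[OF gen] unfolding n0_def .
lemma om_ex: "x \<noteq> 0 \<Longrightarrow> \<exists>k<n0. x = \<omega> ^ k" using gen_facts(4)[OF gen] unfolding n0_def by blast
lemma om_nz: "\<omega> \<noteq> 0" using gen by (simp add: is_generator_def)
lemma r_dvd: "r dvd n0" using rdvd unfolding n0_def .
lemma r_pos: "r > 0" using r3 by simp

lemma n0_eq: "n0 = r * (n0 div r)" using r_dvd by simp

lemma zeta_r: "\<zeta> ^ r = 1"
proof -
  have "\<zeta> ^ r = \<omega> ^ ((n0 div r) * r)" unfolding \<zeta>_def by (simp add: power_mult)
  also have "(n0 div r) * r = n0" using r_dvd by simp
  finally show ?thesis using om_n0 by simp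
qed

lemma zeta_pow: "\<zeta> ^ t = \<omega> ^ (t * (n0 div r))"
  unfolding \<zeta>_def by (simp add: power_mult[symmetric] mult.commute)

lemma zeta_inj: "inj_on (\<lambda>t. \<zeta> ^ t) {..<r}"
proof (rule inj_onI)
  fix a b assume a: "a \<in> {..<r}" and b: "b \<in> {..<r}" and e: "\<zeta> ^ a = \<zeta> ^ b"
  have "n0 div r > 0" using n0_pos r_dvd r_pos by (metis dvd_div_eq_0_iff gr0I not_less0) 
  have lt: "t * (n0 div r) < n0" if "t < r" for t
  proof -
    have "t * (n0 div r) < r * (n0 div r)" using that \<open>n0 div r > 0\<close> by simp
    then show ?thesis using n0_eq by simp
  qed
  have "a * (n0 div r) = b * (n0 div r)"
    by (rule inj_onD[OF om_inj]) (use e a b lt in \<open>auto simp: zeta_pow\<close>)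
  then show "a = b" using \<open>n0 div r > 0\<close> by simp
qed

lemma rootsof1: assumes "x \<noteq> 0" "x ^ r = 1" shows "\<exists>t<r. x = \<zeta> ^ t"
proof -
  obtain k where k: "k < n0" "x = \<omega> ^ k" using om_ex[OF assms(1)] by blast
  have "\<omega> ^ (k * r) = 1" using assms(2) k by (simp add: power_mult)
  then have "n0 dvd k * r" using gen_pow_eq_1[OF gen] unfolding n0_def by simp
  then have "r * (n0 div r) dvd r * k" using n0_eq by (simp add: mult.commute)
  then have "(n0 div r) dvd k" using r_pos by simp
  then obtain t where t: "k = (n0 div r) * t" by auto
  have "n0 div r > 0" using n0_pos r_dvd r_pos by (metis dvd_div_eq_0_iff gr0I not_less0) 
  have "(n0 div r) * t < (n0 div r) * r" using k(1) t n0_eq by (simp add: mult.commute)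
  then have "t < r" using \<open>n0 div r > 0\<close> by simp
  moreover have "x = \<zeta> ^ t" using k t zeta_pow by (simp add: mult.commute)
  ultimately show ?thesis by blast
qed

lemma zeta_nz: "\<zeta> \<noteq> 0" unfolding \<zeta>_def using om_nz by simp

lemma uncertainty:
  fixes P :: "'a poly"
  assumes "P \<noteq> 0" "degree P < r" "T \<subseteq> {..<r}" "\<And>t. t \<in> T \<Longrightarrow> poly P (\<zeta> ^ t) = 0"
  shows "card T < poly_sparsity P"
proof -
  have sub: "{x. x \<noteq> 0 \<and> x ^ r = 1 \<and> poly P x \<noteq> 0} \<subseteq> (\<lambda>t. \<zeta> ^ t) ` ({..<r} - T)"
  proof
    fix x assume "x \<in> {x. x \<noteq> 0 \<and> x ^ r = 1 \<and> poly P x \<noteq> 0}"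
    then have x: "x \<noteq> 0" "x ^ r = 1" "poly P x \<noteq> 0" by auto
    obtain t where t: "t < r" "x = \<zeta> ^ t" using rootsof1[OF x(1,2)] by blast
    have "t \<notin> T" using assms(4) t x(3) by auto
    then show "x \<in> (\<lambda>t. \<zeta> ^ t) ` ({..<r} - T)" using t by auto
  qed
  have "card {x. x \<noteq> 0 \<and> x ^ r = 1 \<and> poly P x \<noteq> 0} \<le> card ((\<lambda>t. \<zeta> ^ t) ` ({..<r} - T))"
    by (rule card_mono[OF _ sub]) simp
  also have "\<dots> \<le> card ({..<r} - T)" by (rule card_image_le) simp
  also have "\<dots> = r - card T" using assms(3) by (simp add: card_Diff_subset finite_subset)
  finally have "card {x. x \<noteq> 0 \<and> x ^ r = 1 \<and> poly P x \<noteq> 0} \<le> r - card T" .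
  moreover have "card T \<le> r" using assms(3) by (metis card_lessThan card_mono finite_lessThan)
  ultimately show ?thesis using sparse[OF assms(1,2)] by linarith
qed

end

definition wr :: "'a::comm_ring_1 \<Rightarrow> nat \<Rightarrow> (nat \<Rightarrow> 'a poly) \<Rightarrow> 'a poly mat" where
  "wr \<omega> w g = mat w w (\<lambda>(i,j). g i \<circ>\<^sub>p [:0, \<omega> ^ j:])"

lemma wr_carrier: "wr \<omega> w g \<in> carrier_mat w w" unfolding wr_def by simp

lemma coeff_of_int_mult: "coeff (of_int k * P) n = of_int k * coeff P n"
  by (simp add: of_int_poly)

lemma wr_dvd:
  fixes \<omega> p :: "'a::field"
  assumes PI: "PI \<subseteq> {..<w}"
  and piv: "\<And>i. i \<in> PI \<Longrightarrow> v i i \<noteq> 0"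
  and offp: "\<And>i k. i \<in> PI \<Longrightarrow> k \<in> PI \<Longrightarrow> k \<noteq> i \<Longrightarrow> v i k = 0"
  and van: "\<And>i j. i \<in> PI \<Longrightarrow> j < w \<Longrightarrow> (\<Sum>k<w. v i k * poly (g k) (\<omega> ^ j * p)) = 0"
  and nz: "det (wr \<omega> w g) \<noteq> 0"
  shows "card PI \<le> order p (det (wr \<omega> w g))"
proof -
  define M where "M = wr \<omega> w g"
  have M: "M \<in> carrier_mat w w" unfolding M_def by (rule wr_carrier)
  define As where "As = mat w w (\<lambda>(i,k). if i \<in> PI then v i k else (if i = k then 1 else (0::'a)))"
  define A where "A = mat w w (\<lambda>(i,k). [: As $$ (i,k) :])"
  have As: "As \<in> carrier_mat w w" unfolding As_def by simp
  have A: "A \<in> carrier_mat w w" unfolding A_def by simp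
  have detAs: "det As \<noteq> 0"
  proof
    assume "det As = 0"
    then obtain u where u: "u \<in> carrier_vec w" "u \<noteq> 0\<^sub>v w" "As *\<^sub>v u = 0\<^sub>v w"
      using det_0_iff_vec_prod_zero_field[OF As] by blast
    have row: "(\<Sum>k<w. As $$ (i,k) * u $ k) = 0" if "i < w" for i
    proof -
      have "(As *\<^sub>v u) $ i = 0" using u(3) that by simp
      then show ?thesis using that As u(1) 
        by (simp add: mult_mat_vec_def scalar_prod_def lessThan_atLeast0)
    qed
    have nonpiv: "u $ i = 0" if "i < w" "i \<notin> PI" for i
    proof -
      have "(\<Sum>k<w. As $$ (i,k) * u $ k) = (\<Sum>k<w. if k = i then u $ k else 0)"
        using that by (intro sum.cong) (auto simp: As_def)
      then show ?thesis using row[OF that(1)] that by simp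
    qed
    have pivz: "u $ i = 0" if "i \<in> PI" for i
    proof -
      have iw: "i < w" using that PI by auto
      have "(\<Sum>k<w. As $$ (i,k) * u $ k) = (\<Sum>k<w. if k = i then v i i * u $ i else 0)"
      proof (intro sum.cong refl)
        fix k assume k: "k \<in> {..<w}"
        show "As $$ (i,k) * u $ k = (if k = i then v i i * u $ i else 0)"
        proof (cases "k = i")
          case True then show ?thesis using iw that by (simp add: As_def)
        next
          case False
          show ?thesis
          proof (cases "k \<in> PI")
            case True then show ?thesis using offp[OF that True] False iw k by (simp add: As_def)
          next
            case kn: False then show ?thesis using nonpiv[of k] k False by simp
          qed
        qed
      qed
      then have "v i i * u $ i = 0" using row[OF iw] iw by simp
      then show ?thesis using piv[OF that] by simp
    qed
    have "u = 0\<^sub>v w"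
      by (rule eq_vecI) (use u(1) nonpiv pivz in auto)
    then show False using u(2) by simp
  qed
  have polydetA: "poly (det A) p = det As"
  proof -
    have "poly (det A) p = (\<Sum>\<sigma>\<in>{\<sigma>. \<sigma> permutes {0..<w}}. signof \<sigma> * (\<Prod>i = 0..<w. poly (A $$ (i, \<sigma> i)) p))"
      unfolding det_def'[OF A] by (simp add: poly_sum poly_prod)
    also have "\<dots> = (\<Sum>\<sigma>\<in>{\<sigma>. \<sigma> permutes {0..<w}}. signof \<sigma> * (\<Prod>i = 0..<w. As $$ (i, \<sigma> i)))"
    proof (intro sum.cong refl arg_cong2[where f = "(*)"] prod.cong)
      fix \<sigma> i assume "\<sigma> \<in> {\<sigma>. \<sigma> permutes {0..<w}}" "i \<in> {0..<w}"
      then have "\<sigma> i < w" "i < w" by (auto simp: permutes_in_image)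
      then show "poly (A $$ (i, \<sigma> i)) p = As $$ (i, \<sigma> i)" unfolding A_def by simp
    qed
    also have "\<dots> = det As" unfolding det_def'[OF As] ..
    finally show ?thesis .
  qed
  have detM: "det (A * M) = det A * det M" by (rule det_mult[OF A M])
  have entry: "[:-p, 1:] dvd (A * M) $$ (i, j)" if "i \<in> PI" "j < w" for i j
  proof -
    have iw: "i < w" using that PI by auto
    have "(A * M) $$ (i, j) = (\<Sum>k\<in>{0..<w}. A $$ (i,k) * M $$ (k, j))"
      using iw that A M by (simp add: scalar_prod_def)
    also have "\<dots> = (\<Sum>k\<in>{0..<w}. [: v i k :] * (g k \<circ>\<^sub>p [:0, \<omega> ^ j:]))"
      using iw that by (intro sum.cong refl) (auto simp: A_def As_def M_def wr_def)
    finally have e: "(A * M) $$ (i, j) = (\<Sum>k\<in>{0..<w}. [: v i k :] * (g k \<circ>\<^sub>p [:0, \<omega> ^ j:]))" .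
    have "poly ((A * M) $$ (i, j)) p = (\<Sum>k<w. v i k * poly (g k) (\<omega> ^ j * p))"
      unfolding e by (simp add: poly_sum poly_pcompose lessThan_atLeast0 mult.commute)
    also have "\<dots> = 0" by (rule van[OF that])
    finally show ?thesis using dvd_iff_poly_eq_0[of "-p"] by simp
  qed
  have dvdAM: "[:-p, 1:] ^ card PI dvd det (A * M)"
  proof -
    have AM: "A * M \<in> carrier_mat w w" using A M by simp
    show ?thesis unfolding det_def'[OF AM]
    proof (rule dvd_sum)
      fix \<sigma> assume "\<sigma> \<in> {\<sigma>. \<sigma> permutes {0..<w}}"
      then have sig: "\<And>i. i < w \<Longrightarrow> \<sigma> i < w" by (auto simp: permutes_in_image)
      have PI': "PI \<subseteq> {0..<w}" using PI by auto
      have "(\<Prod>i = 0..<w. (A * M) $$ (i, \<sigma> i)) = 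
            (\<Prod>i\<in>PI. (A * M) $$ (i, \<sigma> i)) * (\<Prod>i\<in>{0..<w} - PI. (A * M) $$ (i, \<sigma> i))"
        using prod.subset_diff[OF PI'] by (simp add: mult.commute)
      moreover have "[:-p, 1:] ^ card PI dvd (\<Prod>i\<in>PI. (A * M) $$ (i, \<sigma> i))"
      proof -
        have "(\<Prod>i\<in>PI. [:-p, 1:]) dvd (\<Prod>i\<in>PI. (A * M) $$ (i, \<sigma> i))"
          by (rule prod_dvd_prod) (use entry sig PI in auto)
        then show ?thesis by simp
      qed
      ultimately show "[:-p, 1:] ^ card PI dvd signof \<sigma> * (\<Prod>i = 0..<w. (A * M) $$ (i, \<sigma> i))"
        by (simp add: dvd_mult)
    qed
  qed
  have dA: "det A \<noteq> 0" using polydetA detAs by auto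
  have "det A * det M \<noteq> 0" using dA nz M_def by simp
  then have "card PI \<le> order p (det A * det M)"
    using dvdAM detM order_divides by metis
  also have "\<dots> = order p (det A) + order p (det M)" by (rule order_mult) fact
  also have "order p (det A) = 0" using polydetA detAs by (simp add: order_0I)
  finally show ?thesis unfolding M_def by simp
qed

lemma wr_nz:
  fixes \<omega> :: "'a::field"
  assumes gnz: "\<And>i. i < w \<Longrightarrow> g i \<noteq> 0"
  and dinj: "inj_on (\<lambda>i. degree (g i)) {..<w}"
  and omi: "inj_on (\<lambda>k. \<omega> ^ k) {..<N}" and dlt: "\<And>i. i < w \<Longrightarrow> degree (g i) < N" 
  and om0: "\<omega> \<noteq> 0"
  shows "det (wr \<omega> w g) \<noteq> 0"
proof -
  define M where "M = wr \<omega> w g"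
  have M: "M \<in> carrier_mat w w" unfolding M_def by (rule wr_carrier)
  define D where "D = (\<Sum>i = 0..<w. degree (g i))"
  define V where "V = mat w w (\<lambda>(i,j). lead_coeff (g i) * (\<omega> ^ j) ^ degree (g i))"
  have V: "V \<in> carrier_mat w w" unfolding V_def by simp
  have fac: "degree (g i \<circ>\<^sub>p [:0, \<omega> ^ j:]) = degree (g i) \<and> 
     lead_coeff (g i \<circ>\<^sub>p [:0, \<omega> ^ j:]) = lead_coeff (g i) * (\<omega> ^ j) ^ degree (g i) \<and>
     g i \<circ>\<^sub>p [:0, \<omega> ^ j:] \<noteq> 0" if "i < w" for i j
  proof -
    have dq: "degree [:0, \<omega> ^ j:] = 1" using om0 by simp
    have d: "degree (g i \<circ>\<^sub>p [:0, \<omega> ^ j:]) = degree (g i)" using om0 by (simp add: degree_pcompose dq)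
    have l: "lead_coeff (g i \<circ>\<^sub>p [:0, \<omega> ^ j:]) = lead_coeff (g i) * (\<omega> ^ j) ^ degree (g i)"
      using lead_coeff_comp[of "[:0, \<omega> ^ j:]" "g i"] dq by simp
    have lc: "lead_coeff (g i \<circ>\<^sub>p [:0, \<omega> ^ j:]) \<noteq> 0" using l gnz[OF that] om0 by simp
    have "g i \<circ>\<^sub>p [:0, \<omega> ^ j:] \<noteq> 0"
    proof
      assume "g i \<circ>\<^sub>p [:0, \<omega> ^ j:] = 0" then show False using lc by simp
    qed
    then show ?thesis using d l by blast
  qed
  have coeffprod: "coeff (\<Prod>i = 0..<w. M $$ (i, \<sigma> i)) D = (\<Prod>i = 0..<w. V $$ (i, \<sigma> i))"
    if "\<sigma> permutes {0..<w}" for \<sigma>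
  proof -
    have sig: "\<And>i. i < w \<Longrightarrow> \<sigma> i < w" using that by (auto simp: permutes_in_image)
    have ent: "M $$ (i, \<sigma> i) = g i \<circ>\<^sub>p [:0, \<omega> ^ \<sigma> i:]" if "i \<in> {0..<w}" for i
      using that sig unfolding M_def wr_def by simp
    have nz: "\<forall>i\<in>{0..<w}. M $$ (i, \<sigma> i) \<noteq> 0" using ent fac by auto
    have "degree (\<Prod>i = 0..<w. M $$ (i, \<sigma> i)) = (\<Sum>i = 0..<w. degree (M $$ (i, \<sigma> i)))"
      by (rule degree_prod_eq_sum_degree[OF nz])
    also have "\<dots> = D" unfolding D_def using ent fac by (intro sum.cong) auto
    finally have dg: "degree (\<Prod>i = 0..<w. M $$ (i, \<sigma> i)) = D" .
    have "coeff (\<Prod>i = 0..<w. M $$ (i, \<sigma> i)) D = (\<Prod>i = 0..<w. lead_coeff (M $$ (i, \<sigma> i)))"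
      using lead_coeff_prod[of "\<lambda>i. M $$ (i, \<sigma> i)" "{0..<w}"] dg by simp
    also have "\<dots> = (\<Prod>i = 0..<w. V $$ (i, \<sigma> i))"
    proof (intro prod.cong refl)
      fix i assume i: "i \<in> {0..<w}"
      then have iw: "i < w" by simp
      have "lead_coeff (M $$ (i, \<sigma> i)) = lead_coeff (g i) * (\<omega> ^ \<sigma> i) ^ degree (g i)"
        using ent[OF i] fac[OF iw, of "\<sigma> i"] by metis
      then show "lead_coeff (M $$ (i, \<sigma> i)) = V $$ (i, \<sigma> i)" using iw sig[OF iw] by (simp add: V_def)
    qed
    finally show ?thesis .
  qed
  have cD: "coeff (det M) D = det V"
    unfolding det_def'[OF M] det_def'[OF V] coeff_sum coeff_of_int_mult
    using coeffprod by (intro sum.cong) auto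
  have "det V \<noteq> 0"
  proof
    assume "det V = 0"
    then obtain u where u: "u \<in> carrier_vec w" "u \<noteq> 0\<^sub>v w" "V *\<^sub>v u = 0\<^sub>v w"
      using det_0_iff_vec_prod_zero_field[OF V] by blast
    define Pu where "Pu = (\<Sum>j<w. monom (u $ j) j)"
    have cPu: "coeff Pu j = (if j < w then u $ j else 0)" for j
      unfolding Pu_def coeff_sum by (simp add: coeff_monom)
    have roots: "poly Pu (\<omega> ^ degree (g i)) = 0" if "i < w" for i
    proof -
      have "(V *\<^sub>v u) $ i = 0" using u(3) that by simp
      then have "(\<Sum>j\<in>{0..<w}. V $$ (i,j) * u $ j) = 0"
        using that V u(1) by (simp add: mult_mat_vec_def scalar_prod_def)
      then have "(\<Sum>j\<in>{0..<w}. lead_coeff (g i) * (u $ j * (\<omega> ^ degree (g i)) ^ j)) = 0"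
        using that by (simp add: V_def power_mult[symmetric] mult.commute mult.left_commute)
      then have "lead_coeff (g i) * (\<Sum>j\<in>{0..<w}. u $ j * (\<omega> ^ degree (g i)) ^ j) = 0"
        by (simp add: sum_distrib_left)
      then have "(\<Sum>j\<in>{0..<w}. u $ j * (\<omega> ^ degree (g i)) ^ j) = 0" using gnz[OF that] by simp
      then show ?thesis unfolding Pu_def by (simp add: poly_sum poly_monom lessThan_atLeast0)
    qed
    have "Pu = 0"
    proof (rule ccontr)
      assume Pnz: "Pu \<noteq> 0"
      have inj: "inj_on (\<lambda>i. \<omega> ^ degree (g i)) {..<w}"
      proof (rule inj_onI)
        fix a b assume "a \<in> {..<w}" "b \<in> {..<w}" "\<omega> ^ degree (g a) = \<omega> ^ degree (g b)"
        then have "degree (g a) = degree (g b)" using inj_onD[OF omi] dlt by auto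
        then show "a = b" using inj_onD[OF dinj] \<open>a \<in> _\<close> \<open>b \<in> _\<close> by auto
      qed
      have "(\<lambda>i. \<omega> ^ degree (g i)) ` {..<w} \<subseteq> {x. poly Pu x = 0}" using roots by auto
      then have "card ((\<lambda>i. \<omega> ^ degree (g i)) ` {..<w}) \<le> card {x. poly Pu x = 0}"
        by (rule card_mono[OF poly_roots_finite[OF Pnz]])
      also have "\<dots> \<le> degree Pu" by (rule card_poly_roots_bound[OF Pnz])
      finally have "w \<le> degree Pu" using card_image[OF inj] by simp
      moreover have "coeff Pu (degree Pu) \<noteq> 0" using Pnz by simp
      ultimately show False using cPu by simp
    qed
    then have uz: "u $ j = 0" if "j < w" for j using cPu[of j] that by simp
    have "u = 0\<^sub>v w"
      by (intro eq_vecI) (use u(1) uz in auto)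
    then show False using u(2) by simp
  qed
  then have "coeff (det M) D \<noteq> 0" using cD by simp
  then show ?thesis unfolding M_def by auto
qed

context tbsetup begin

lemma idx_mod: assumes "i \<in> tb_index_set (card (UNIV::'a set)) r l" shows "i mod r \<noteq> r - 1"
proof -
  have "(r - 1) mod r = r - 1" "1 mod r = 1" using r3 by auto
  then show ?thesis using assms r3 unfolding tb_index_set_def by auto
qed

lemma dual_of_class1:
  fixes f :: "'a poly"
  assumes fS: "\<And>i. coeff f i \<noteq> 0 \<Longrightarrow> i \<in> tb_index_set (card (UNIV::'a set)) r l"
  and c1: "\<And>i. coeff f i \<noteq> 0 \<Longrightarrow> i mod r = 1"
  shows "ev f \<in> dual_code (tb_code r l :: ('a \<Rightarrow> 'a) set)"
  unfolding dual_code_def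
proof (intro CollectI conjI ballI)
  show "ev f 0 = 0" by (simp add: ev_def)
  fix c :: "'a \<Rightarrow> 'a" assume "c \<in> tb_code r l"
  then obtain f' :: "'a poly" where c: "c = ev f'" and f'S: "\<forall>i. coeff f' i \<noteq> 0 \<longrightarrow> i \<in> tb_index_set (card (UNIV::'a set)) r l"
    unfolding tb_code_def by blast
  let ?U = "UNIV - {0::'a}"
  let ?T = "\<lambda>i j x. coeff f' i * coeff f j * x ^ (i + j)"
  have "(\<Sum>x\<in>?U. c x * ev f x) = (\<Sum>x\<in>?U. poly f' x * poly f x)"
    unfolding c ev_def by (intro sum.cong) auto
  also have "\<dots> = (\<Sum>x\<in>?U. \<Sum>i\<le>degree f'. \<Sum>j\<le>degree f. ?T i j x)"
    unfolding poly_altdef sum_product by (intro sum.cong refl) (simp add: power_add mult_ac)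
  also have "\<dots> = (\<Sum>i\<le>degree f'. \<Sum>x\<in>?U. \<Sum>j\<le>degree f. ?T i j x)" by (rule sum.swap)
  also have "\<dots> = (\<Sum>i\<le>degree f'. \<Sum>j\<le>degree f. \<Sum>x\<in>?U. ?T i j x)"
    by (intro sum.cong refl sum.swap)
  also have "\<dots> = 0"
  proof (rule sum.neutral, rule ballI, rule sum.neutral, rule ballI)
    fix i j
    show "(\<Sum>x\<in>?U. ?T i j x) = 0"
    proof (cases "coeff f' i \<noteq> 0 \<and> coeff f j \<noteq> 0")
      case True
      have im: "i mod r \<noteq> r - 1" using idx_mod f'S True by blast
      have jm: "j mod r = 1" using c1 True by blast
      have "(i + j) mod r = (i mod r + 1) mod r" using jm by (metis mod_add_eq mod_mod_trivial)
      moreover have "i mod r + 1 < r" using im r_pos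
        by (metis Suc_eq_plus1 Suc_lessI diff_Suc_1 mod_less_divisor)
      ultimately have "(i + j) mod r \<noteq> 0" by simp
      then have "\<not> r dvd (i + j)" by auto
      then have "\<not> n0 dvd (i + j)" using r_dvd dvd_trans by blast
      then have "(\<Sum>x\<in>?U. x ^ (i + j)) = 0" using sum_pow_zero[OF gen] unfolding n0_def by blast
      then show ?thesis by (simp add: sum_distrib_left[symmetric])
    next
      case False
      then show ?thesis by auto
    qed
  qed
  finally show "(\<Sum>x\<in>?U. c x * ev f x) = 0" .
qed

end

lemma lin_nontriv:
  fixes K :: "nat \<Rightarrow> nat \<Rightarrow> 'a::{finite,field}"
  assumes fT: "finite T" and fE: "finite E" and lt: "card E < card T"
  shows "\<exists>\<mu>. (\<forall>t. t \<notin> T \<longrightarrow> \<mu> t = 0) \<and> (\<exists>t\<in>T. \<mu> t \<noteq> 0) \<and> (\<forall>e\<in>E. (\<Sum>t\<in>T. K e t * \<mu> t) = 0)"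
proof -
  let ?Phi = "\<lambda>\<mu>. restrict (\<lambda>e. \<Sum>t\<in>T. K e t * \<mu> t) E"
  have c2: "card (UNIV::'a set) \<ge> 2"
  proof -
    have "card {0::'a,1} \<le> card (UNIV::'a set)" by (rule card_mono) auto
    then show ?thesis by simp
  qed
  have cT: "card (PiE T (\<lambda>_. UNIV :: 'a set)) = card (UNIV::'a set) ^ card T"
    using fT by (simp add: card_PiE)
  have cE: "card (PiE E (\<lambda>_. UNIV :: 'a set)) = card (UNIV::'a set) ^ card E"
    using fE by (simp add: card_PiE)
  have "\<not> inj_on ?Phi (PiE T (\<lambda>_. UNIV))"
  proof
    assume inj: "inj_on ?Phi (PiE T (\<lambda>_. UNIV))"
    have "?Phi ` (PiE T (\<lambda>_. UNIV)) \<subseteq> PiE E (\<lambda>_. UNIV)" by auto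
    then have "card (PiE T (\<lambda>_. UNIV :: 'a set)) \<le> card (PiE E (\<lambda>_. UNIV :: 'a set))"
      using card_inj_on_le[OF inj] fE by (simp add: finite_PiE)
    then have "card (UNIV::'a set) ^ card T \<le> card (UNIV::'a set) ^ card E" using cT cE by simp
    moreover have "card (UNIV::'a set) ^ card E < card (UNIV::'a set) ^ card T"
      using c2 lt by (intro power_strict_increasing) auto
    ultimately show False by simp
  qed
  then obtain \<mu>1 \<mu>2 where m: "\<mu>1 \<in> PiE T (\<lambda>_. UNIV)" "\<mu>2 \<in> PiE T (\<lambda>_. UNIV)" "\<mu>1 \<noteq> \<mu>2"
    "?Phi \<mu>1 = ?Phi \<mu>2" unfolding inj_on_def by blast
  define \<mu> where "\<mu> = (\<lambda>t. \<mu>1 t - \<mu>2 t)"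
  have out: "\<forall>t. t \<notin> T \<longrightarrow> \<mu> t = 0" using m(1,2) unfolding \<mu>_def by (auto simp: PiE_def extensional_def)
  have "\<exists>t\<in>T. \<mu> t \<noteq> 0"
  proof (rule ccontr)
    assume "\<not> (\<exists>t\<in>T. \<mu> t \<noteq> 0)"
    then have "\<mu>1 = \<mu>2" using out unfolding \<mu>_def by (intro ext) (metis right_minus_eq)
    then show False using m(3) by simp
  qed
  moreover have "\<forall>e\<in>E. (\<Sum>t\<in>T. K e t * \<mu> t) = 0"
  proof
    fix e assume e: "e \<in> E"
    have "(\<Sum>t\<in>T. K e t * \<mu>1 t) = (\<Sum>t\<in>T. K e t * \<mu>2 t)"
      using fun_cong[OF m(4), of e] e by simp
    then show "(\<Sum>t\<in>T. K e t * \<mu> t) = 0" unfolding \<mu>_def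
      by (simp add: right_diff_distrib sum_subtractf)
  qed
  ultimately show ?thesis using out by blast
qed

locale mainloc = tbsetup \<omega> r for \<omega> :: "'a::{finite,field}" and r +
  fixes s l :: nat and f :: "'a poly"
  assumes sdvd: "s dvd ((card (UNIV::'a set) - 1) div r)" and sbig: "s \<ge> 2 * r ^ 2"
  and fS: "\<And>i. coeff f i \<noteq> 0 \<Longrightarrow> i \<in> tb_index_set (card (UNIV::'a set)) r l"
  and Snz: "\<exists>a<r. a \<noteq> 1 \<and> cls r a f \<noteq> 0"
  and l1: "l \<ge> 1" and ln0: "l \<le> card (UNIV::'a set) - 1"
begin

definition "G a = cls r a f"
definition "S' = {a. a < r \<and> a \<noteq> 1 \<and> G a \<noteq> 0}"
definition "w = card S'"
definition "as = sorted_list_of_set S'"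
definition "g i = G (as ! i)"
definition "B = n0 div s"
definition "h = (n0 div r) div s"
definition "zb b \<longleftrightarrow> (\<forall>j<s. poly f (\<omega> ^ (s * b + j)) = 0)"
definition "Zt b = {t. t < r \<and> zb ((b + t * h) mod B)}"
definition "M = wr \<omega> w g"

lemma s_pos: "s > 0"
proof -
  have "r ^ 2 > 0" using r3 by simp
  then show ?thesis using sbig by linarith
qed

lemma s_dvd: "s dvd n0 div r" using sdvd unfolding n0_def .

lemma sB: "s * B = n0"
proof -
  have "n0 div r dvd n0" using n0_eq dvd_triv_right[of "n0 div r" r] by simp
  then have "s dvd n0" using s_dvd dvd_trans by blast
  then show ?thesis unfolding B_def by simp
qed

lemma sh: "s * h = n0 div r" unfolding h_def using s_dvd by simp

lemma B_pos: "B > 0" using sB n0_pos by (cases "B = 0") auto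

lemma s_ge_r: "s \<ge> r + 2"
proof -
  have "r * r \<ge> 3 * r" using r3 by simp
  moreover have "r ^ 2 = r * r" by (simp add: power2_eq_square)
  ultimately have "r ^ 2 \<ge> r + 2" using r3 by linarith
  then show ?thesis using sbig by linarith
qed

lemma blk: "\<omega> ^ (s * ((b + t * h) mod B) + j) = \<zeta> ^ t * \<omega> ^ (s * b + j)"
proof -
  have e1: "s * ((b + t * h) mod B) = (s * (b + t * h)) mod n0"
    using mult_mod_right[of s "b + t * h" B] sB by simp
  have e2: "s * (b + t * h) + j = t * (n0 div r) + (s * b + j)"
    using sh by (simp add: algebra_simps)
  have "(s * ((b + t * h) mod B) + j) mod n0 = (t * (n0 div r) + (s * b + j)) mod n0"
    unfolding e1 e2[symmetric] by (simp add: mod_add_left_eq)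
  then have "\<omega> ^ (s * ((b + t * h) mod B) + j) = \<omega> ^ (t * (n0 div r) + (s * b + j))"
    using om_mod[of "s * ((b + t * h) mod B) + j"] om_mod[of "t * (n0 div r) + (s * b + j)"] by simp
  also have "\<dots> = \<zeta> ^ t * \<omega> ^ (s * b + j)" by (simp add: power_add zeta_pow)
  finally show ?thesis .
qed

lemma G_rm1: "G (r - 1) = 0"
proof (rule poly_eqI)
  fix i
  show "coeff (G (r - 1)) i = coeff 0 i"
    unfolding G_def coeff_cls using idx_mod fS by auto
qed

lemma S'_sub: "S' \<subseteq> {..<r} - {1, r - 1}" unfolding S'_def using G_rm1 by auto

lemma fin_S': "finite S'" using S'_sub by (meson finite_Diff finite_lessThan finite_subset)

lemma w_le: "w + 2 \<le> r"
proof -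
  have "w \<le> card ({..<r} - {1, r - 1})" unfolding w_def by (rule card_mono[OF _ S'_sub]) simp
  also have "\<dots> = r - 2" using r3 by (subst card_Diff_subset) auto
  finally show ?thesis using r3 by simp
qed

lemma w_pos: "w \<ge> 1"
proof -
  obtain a where "a < r" "a \<noteq> 1" "cls r a f \<noteq> 0" using Snz by blast
  then have "a \<in> S'" unfolding S'_def G_def by simp
  then show ?thesis unfolding w_def using fin_S' by (metis One_nat_def Suc_leI card_gt_0_iff empty_iff)
qed

lemma G_deg: assumes "a \<noteq> 1" shows "degree (G a) \<le> l - 1"
proof (rule degree_le, intro allI impI)
  fix i assume i: "l - 1 < i"
  show "coeff (G a) i = 0"
  proof (rule ccontr)
    assume nz: "coeff (G a) i \<noteq> 0"
    then have im: "i mod r = a" "coeff f i \<noteq> 0" unfolding G_def coeff_cls by (auto split: if_splits)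
    have "i \<in> tb_index_set (card (UNIV::'a set)) r l" using fS im(2) .
    moreover have "1 mod r = 1" using r3 by simp
    ultimately have "i < l" using im(1) assms unfolding tb_index_set_def by auto
    then show False using i by simp
  qed
qed

lemma G_zero: assumes "a < r" "a \<notin> S'" "a \<noteq> 1" shows "G a = 0"
  using assms unfolding S'_def by auto

lemma G_degmod: assumes "G a \<noteq> 0" shows "degree (G a) mod r = a"
proof -
  have "coeff (G a) (degree (G a)) \<noteq> 0" using assms by simp
  then show ?thesis unfolding G_def coeff_cls by (auto split: if_splits)
qed

lemma as_props: "distinct as" "set as = S'" "length as = w"
  unfolding as_def w_def using fin_S' by auto

lemma as_in: "i < w \<Longrightarrow> as ! i \<in> S'" using as_props by (metis nth_mem)

lemma as_bij: "bij_betw (\<lambda>i. as ! i) {..<w} S'"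
proof -
  have "bij_betw (\<lambda>i. as ! i) {..<length as} (set as)"
    using as_props(1) by (simp add: bij_betw_nth lessThan_atLeast0)
  then show ?thesis using as_props by simp
qed

lemma g_nz: "i < w \<Longrightarrow> g i \<noteq> 0" using as_in unfolding g_def S'_def by auto

lemma g_deg: "i < w \<Longrightarrow> degree (g i) \<le> l - 1" using as_in G_deg unfolding g_def S'_def by auto

lemma g_inj: "inj_on (\<lambda>i. degree (g i)) {..<w}"
proof (rule inj_onI)
  fix i j assume i: "i \<in> {..<w}" and j: "j \<in> {..<w}" and e: "degree (g i) = degree (g j)"
  have "as ! i = as ! j" using G_degmod g_nz i j e unfolding g_def by (metis lessThan_iff)
  then show "i = j" using as_props i j by (simp add: nth_eq_iff_index_eq)
qed

lemma g_lt: assumes "i < w" shows "degree (g i) < n0"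
  using g_deg[OF assms] l1 ln0 unfolding n0_def by linarith

lemma M_nz: "det M \<noteq> 0"
  unfolding M_def by (rule wr_nz[OF g_nz g_inj om_inj g_lt om_nz])

lemma M_deg: "degree (det M) \<le> (l - 1) * w"
proof -
  have "degree (det M) \<le> (l - 1) * w"
  proof (rule degree_det_le)
    show "M \<in> carrier_mat w w" unfolding M_def by (rule wr_carrier)
    fix i j assume "i < w" "j < w"
    then show "degree (M $$ (i, j)) \<le> l - 1"
      unfolding M_def wr_def using g_deg om_nz by (simp add: degree_pcompose)
  qed
  then show ?thesis .
qed

end

context mainloc begin

lemma zeta_t_r: "(\<zeta> ^ t) ^ r = 1"
  by (metis power_mult mult.commute power_one zeta_r)

lemma poly_f_split: "poly f (\<zeta> ^ t * x) = (\<Sum>a<r. (\<zeta> ^ t) ^ a * poly (G a) x)"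
proof -
  have "poly f (\<zeta> ^ t * x) = poly (\<Sum>a<r. cls r a f) (\<zeta> ^ t * x)" by (subst sum_cls[OF r_pos]) (rule refl)
  also have "\<dots> = (\<Sum>a<r. poly (cls r a f) (\<zeta> ^ t * x))" by (simp add: poly_sum)
  also have "\<dots> = (\<Sum>a<r. (\<zeta> ^ t) ^ a * poly (G a) x)"
    unfolding G_def using poly_cls_mult[OF zeta_t_r] by simp
  finally show ?thesis .
qed

lemma zb_point: assumes "t \<in> Zt b" "j < s" shows "poly f (\<zeta> ^ t * \<omega> ^ (s * b + j)) = 0"
  using assms blk[of b t j] unfolding Zt_def zb_def by auto

lemma Zt_sub: "Zt b \<subseteq> {..<r}" unfolding Zt_def by auto

lemma fin_Zt: "finite (Zt b)" using Zt_sub by (meson finite_lessThan finite_subset)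

lemma use_wr:
  assumes Piv: "Piv \<subseteq> S'" and piv: "\<And>a. a \<in> Piv \<Longrightarrow> \<rho> a a \<noteq> 0"
  and offp: "\<And>a a'. a \<in> Piv \<Longrightarrow> a' \<in> Piv \<Longrightarrow> a' \<noteq> a \<Longrightarrow> \<rho> a a' = 0"
  and van: "\<And>a j. a \<in> Piv \<Longrightarrow> j < s \<Longrightarrow> (\<Sum>a'\<in>S'. \<rho> a a' * poly (G a') (\<omega> ^ (s * b + j))) = 0"
  and e: "e + w \<le> s"
  shows "card Piv \<le> order (\<omega> ^ (s * b + e)) (det M)"
proof -
  define PI where "PI = {i. i < w \<and> as ! i \<in> Piv}"
  define v where "v i k = \<rho> (as ! i) (as ! k)" for i k
  have PIsub: "PI \<subseteq> {..<w}" unfolding PI_def by auto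
  have bPI: "bij_betw (\<lambda>i. as ! i) PI Piv"
  proof -
    have b1: "bij_betw (\<lambda>i. as ! i) PI ((\<lambda>i. as ! i) ` PI)"
      by (rule bij_betw_subset[OF as_bij PIsub]) simp
    have img: "(\<lambda>i. as ! i) ` PI = Piv"
    proof
      show "(\<lambda>i. as ! i) ` PI \<subseteq> Piv" unfolding PI_def by auto
      show "Piv \<subseteq> (\<lambda>i. as ! i) ` PI"
      proof
        fix a assume a: "a \<in> Piv"
        then have "a \<in> (\<lambda>i. as ! i) ` {..<w}" using Piv bij_betw_imp_surj_on[OF as_bij] by auto
        then obtain i where "i < w" "a = as ! i" by auto
        then show "a \<in> (\<lambda>i. as ! i) ` PI" unfolding PI_def using a by auto
      qed
    qed
    show ?thesis using b1 unfolding img .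
  qed
  have cPI: "card PI = card Piv" by (rule bij_betw_same_card[OF bPI])
  have h1: "v i i \<noteq> 0" if "i \<in> PI" for i using that unfolding v_def PI_def using piv by auto
  have h2: "v i k = 0" if i: "i \<in> PI" and k: "k \<in> PI" and ki: "k \<noteq> i" for i k
  proof -
    have "as ! k \<noteq> as ! i" using i k ki as_props unfolding PI_def by (simp add: nth_eq_iff_index_eq)
    then show "v i k = 0" unfolding v_def using offp i k unfolding PI_def by auto
  qed
  have h3: "(\<Sum>k<w. v i k * poly (g k) (\<omega> ^ j * \<omega> ^ (s * b + e))) = 0" if i: "i \<in> PI" and j: "j < w" for i j
  proof -
    have ej: "e + j < s" using e j by simp
    have pw: "\<omega> ^ j * \<omega> ^ (s * b + e) = \<omega> ^ (s * b + (e + j))" by (simp add: power_add mult_ac)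
    have "(\<Sum>k<w. v i k * poly (g k) (\<omega> ^ j * \<omega> ^ (s * b + e))) 
        = (\<Sum>k<w. \<rho> (as ! i) (as ! k) * poly (G (as ! k)) (\<omega> ^ (s * b + (e + j))))"
      unfolding v_def g_def pw ..
    also have "\<dots> = (\<Sum>a'\<in>S'. \<rho> (as ! i) a' * poly (G a') (\<omega> ^ (s * b + (e + j))))"
      by (rule sum.reindex_bij_betw[OF as_bij])
    also have "\<dots> = 0" using van[OF _ ej] i unfolding PI_def by auto
    finally show ?thesis .
  qed
  have h4: "det (wr \<omega> w g) \<noteq> 0" using M_nz unfolding M_def .
  have "card PI \<le> order (\<omega> ^ (s * b + e)) (det (wr \<omega> w g))"
    by (rule wr_dvd[OF PIsub h1 h2 h3 h4])
  then show ?thesis using cPI unfolding M_def by simp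
qed

lemma full_van: assumes full: "Zt b = {..<r}" and j: "j < s" and a: "a < r"
  shows "poly (G a) (\<omega> ^ (s * b + j)) = 0"
proof -
  define x where "x = \<omega> ^ (s * b + j)"
  have z: "poly (fib r f x) (\<zeta> ^ t) = 0" if "t < r" for t
  proof -
    have "poly (fib r f x) (\<zeta> ^ t) = poly f (\<zeta> ^ t * x)" by (rule poly_fib[OF zeta_t_r r_pos])
    also have "\<dots> = 0" unfolding x_def using zb_point[of t b j] full that j by auto
    finally show ?thesis .
  qed
  have "fib r f x = 0"
  proof (rule ccontr)
    assume nz: "fib r f x \<noteq> 0"
    have "card {..<r} < poly_sparsity (fib r f x)"
      by (rule uncertainty[OF nz degree_fib[OF r_pos]]) (use z in auto)
    moreover have "poly_sparsity (fib r f x) \<le> r"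
    proof -
      have "poly_sparsity (fib r f x) \<le> card {a. a < r \<and> poly (cls r a f) x \<noteq> 0}" by (rule sparsity_fib)
      also have "\<dots> \<le> card {..<r}" by (rule card_mono) auto
      finally show ?thesis by simp
    qed
    ultimately show False by simp
  qed
  then have "coeff (fib r f x) a = 0" by simp
  then show ?thesis using a unfolding coeff_fib G_def x_def by simp
qed

lemma nonfull_card: assumes nf: "Zt b \<noteq> {..<r}" shows "card (Zt b) \<le> w"
proof -
  obtain t0 where t0: "t0 < r" "t0 \<notin> Zt b" using nf Zt_sub by blast
  then have "\<not> zb ((b + t0 * h) mod B)" unfolding Zt_def by auto
  then obtain j0 where j0: "j0 < s" "poly f (\<omega> ^ (s * ((b + t0 * h) mod B) + j0)) \<noteq> 0"
    unfolding zb_def by auto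
  define x where "x = \<omega> ^ (s * b + j0)"
  have nz0: "poly f (\<zeta> ^ t0 * x) \<noteq> 0" using j0 blk unfolding x_def by simp
  have H: "poly (fib r f x) (\<zeta> ^ t) = poly f (\<zeta> ^ t * x)" for t by (rule poly_fib[OF zeta_t_r r_pos])
  have Hnz: "fib r f x \<noteq> 0" using nz0 H[of t0] by auto
  have "card (Zt b) < poly_sparsity (fib r f x)"
    by (rule uncertainty[OF Hnz degree_fib[OF r_pos] Zt_sub]) (use H zb_point j0 x_def in auto)
  also have "\<dots> \<le> card {a. a < r \<and> poly (cls r a f) x \<noteq> 0}" by (rule sparsity_fib)
  also have "\<dots> \<le> card (insert 1 S')"
  proof (rule card_mono)
    show "finite (insert 1 S')" using fin_S' by simp
    show "{a. a < r \<and> poly (cls r a f) x \<noteq> 0} \<subseteq> insert 1 S'"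
      unfolding S'_def G_def by auto
  qed
  also have "\<dots> \<le> w + 1" unfolding w_def using fin_S' by (simp add: card_insert_if)
  finally show ?thesis by simp
qed

lemma nonfull_piv: assumes nf: "Zt b \<noteq> {..<r}" and m2: "card (Zt b) \<ge> 2"
  shows "\<exists>Piv \<rho>. Piv \<subseteq> S' \<and> card Piv = card (Zt b) - 1 \<and> (\<forall>a\<in>Piv. \<rho> a a \<noteq> 0) \<and>
     (\<forall>a\<in>Piv. \<forall>a'\<in>Piv. a' \<noteq> a \<longrightarrow> \<rho> a a' = 0) \<and>
     (\<forall>a\<in>Piv. \<forall>j<s. (\<Sum>a'\<in>S'. \<rho> a a' * poly (G a') (\<omega> ^ (s * b + j))) = 0)"
proof -
  define T where "T = Zt b"
  define m where "m = card T"
  have mw: "m \<le> w" using nonfull_card[OF nf] unfolding m_def T_def .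
  have "m - 1 \<le> card S'" using mw unfolding w_def by simp
  then obtain Piv where Piv: "Piv \<subseteq> S'" "card Piv = m - 1"
    using obtain_subset_with_card_n by metis
  have finPiv: "finite Piv" using Piv fin_S' finite_subset by blast
  have oneP: "1 \<notin> Piv" using Piv S'_def by auto
  have Pivr: "Piv \<subseteq> {..<r}" using Piv S'_sub by auto
  have each: "\<exists>\<rho>v. \<rho>v a \<noteq> 0 \<and> (\<forall>a'\<in>Piv. a' \<noteq> a \<longrightarrow> \<rho>v a' = 0) \<and>
     (\<forall>j<s. (\<Sum>a'\<in>S'. \<rho>v a' * poly (G a') (\<omega> ^ (s * b + j))) = 0)" if aP: "a \<in> Piv" for a
  proof -
    define E where "E = insert 1 (Piv - {a})"
    have cE: "card E = m - 1"
    proof -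
      have "card (Piv - {a}) = m - 2" using Piv aP finPiv by (simp add: card_Diff_singleton)
      moreover have "1 \<notin> Piv - {a}" using oneP by auto
      ultimately have "card E = m - 2 + 1" unfolding E_def using finPiv by simp
      then show ?thesis using m2 unfolding m_def T_def by simp
    qed
    have "card E < card T" using cE m2 unfolding m_def T_def by simp
    then obtain \<mu> where mu: "\<forall>t. t \<notin> T \<longrightarrow> \<mu> t = 0" "\<exists>t\<in>T. \<mu> t \<noteq> 0"
       "\<forall>e\<in>E. (\<Sum>t\<in>T. \<zeta> ^ (t * e) * \<mu> t) = 0"
      using lin_nontriv[of T E "\<lambda>e t. \<zeta> ^ (t * e)"] fin_Zt finPiv unfolding T_def E_def by auto
    define \<rho>v where "\<rho>v a' = (\<Sum>t\<in>T. \<zeta> ^ (t * a') * \<mu> t)" for a'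
    define P where "P = (\<Sum>t\<in>T. monom (\<mu> t) t)"
    have cP: "coeff P k = (if k \<in> T then \<mu> k else 0)" for k
      unfolding P_def coeff_sum coeff_monom using fin_Zt unfolding T_def by (simp add: sum.delta)
    have polyP: "poly P (\<zeta> ^ a') = \<rho>v a'" for a'
      unfolding P_def \<rho>v_def by (simp add: poly_sum poly_monom power_mult[symmetric] mult.commute)
    have PE: "\<rho>v e = 0" if "e \<in> E" for e using mu(3) that unfolding \<rho>v_def by auto
    have Pnz: "P \<noteq> 0" using mu(2) cP by (metis coeff_0)
    have Pdeg: "degree P < r"
    proof -
      have "degree P \<le> r - 1"
        by (rule degree_le) (use r_pos in \<open>auto simp: cP T_def dest: subsetD[OF Zt_sub]\<close>)
      then show ?thesis using r_pos by simp
    qed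
    have ra: "\<rho>v a \<noteq> 0"
    proof
      assume ra0: "\<rho>v a = 0"
      have sub: "insert 1 Piv \<subseteq> {..<r}" using Pivr r3 by auto
      have "card (insert 1 Piv) < poly_sparsity P"
      proof (rule uncertainty[OF Pnz Pdeg sub])
        fix t assume "t \<in> insert 1 Piv"
        then have "t = a \<or> t \<in> E" unfolding E_def by auto
        then show "poly P (\<zeta> ^ t) = 0" using ra0 PE polyP by auto
      qed
      moreover have "card (insert 1 Piv) = m" using oneP finPiv Piv m2 unfolding m_def T_def by simp
      moreover have "poly_sparsity P \<le> m"
        unfolding poly_sparsity_def m_def by (rule card_mono) (use fin_Zt cP in \<open>auto simp: T_def split: if_splits\<close>)
      ultimately show False by simp
    qed
    have off: "\<forall>a'\<in>Piv. a' \<noteq> a \<longrightarrow> \<rho>v a' = 0" using PE unfolding E_def by auto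
    have vn: "(\<Sum>a'\<in>S'. \<rho>v a' * poly (G a') (\<omega> ^ (s * b + j))) = 0" if j: "j < s" for j
    proof -
      define x where "x = \<omega> ^ (s * b + j)"
      have "(\<Sum>a'\<in>S'. \<rho>v a' * poly (G a') x) = (\<Sum>a'<r. \<rho>v a' * poly (G a') x)"
      proof (rule sum.mono_neutral_left)
        show "finite {..<r}" by simp
        show "S' \<subseteq> {..<r}" using S'_sub by auto
        show "\<forall>i\<in>{..<r} - S'. \<rho>v i * poly (G i) x = 0"
        proof
          fix i assume i: "i \<in> {..<r} - S'"
          show "\<rho>v i * poly (G i) x = 0"
          proof (cases "i = 1")
            case True then have "\<rho>v i = 0" using PE unfolding E_def by auto
            then show ?thesis by simp
          next
            case False then have "G i = 0" using G_zero i by auto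
            then show ?thesis by simp
          qed
        qed
      qed
      also have "\<dots> = (\<Sum>a'<r. \<Sum>t\<in>T. \<mu> t * ((\<zeta> ^ t) ^ a' * poly (G a') x))"
        unfolding \<rho>v_def by (simp add: sum_distrib_left sum_distrib_right power_mult[symmetric] mult_ac)
      also have "\<dots> = (\<Sum>t\<in>T. \<mu> t * (\<Sum>a'<r. (\<zeta> ^ t) ^ a' * poly (G a') x))"
        by (subst sum.swap) (simp add: sum_distrib_left)
      also have "\<dots> = (\<Sum>t\<in>T. \<mu> t * poly f (\<zeta> ^ t * x))" by (simp add: poly_f_split)
      also have "\<dots> = 0" using zb_point j unfolding T_def x_def by (intro sum.neutral) auto
      finally show ?thesis unfolding x_def .
    qed
    show ?thesis using ra off vn by blast
  qed
  then have "\<forall>a\<in>Piv. \<exists>\<rho>v. \<rho>v a \<noteq> 0 \<and> (\<forall>a'\<in>Piv. a' \<noteq> a \<longrightarrow> \<rho>v a' = 0) \<and>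
     (\<forall>j<s. (\<Sum>a'\<in>S'. \<rho>v a' * poly (G a') (\<omega> ^ (s * b + j))) = 0)" by blast
  from bchoice[OF this] obtain \<rho> where rho: "\<forall>a\<in>Piv. \<rho> a a \<noteq> 0 \<and> (\<forall>a'\<in>Piv. a' \<noteq> a \<longrightarrow> \<rho> a a' = 0) \<and>
     (\<forall>j<s. (\<Sum>a'\<in>S'. \<rho> a a' * poly (G a') (\<omega> ^ (s * b + j))) = 0)"
    by blast
  show ?thesis using Piv rho unfolding m_def T_def by blast
qed

definition "dd b = (if Zt b = {..<r} then w else card (Zt b) - 1)"

lemma dd_order: assumes e: "e + w \<le> s" shows "dd b \<le> order (\<omega> ^ (s * b + e)) (det M)"
proof (cases "Zt b = {..<r}")
  case True
  have "card S' \<le> order (\<omega> ^ (s * b + e)) (det M)"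
  proof (rule use_wr[where \<rho> = "\<lambda>a a'. if a' = a then 1 else 0"])
    fix a j assume a: "a \<in> S'" and j: "j < s"
    have "(\<Sum>a'\<in>S'. (if a' = a then 1 else 0) * poly (G a') (\<omega> ^ (s * b + j))) = poly (G a) (\<omega> ^ (s * b + j))"
    proof -
      have "(\<Sum>a'\<in>S'. (if a' = a then 1 else 0) * poly (G a') (\<omega> ^ (s * b + j)))
          = (\<Sum>a'\<in>S'. if a' = a then poly (G a') (\<omega> ^ (s * b + j)) else 0)"
        by (intro sum.cong) auto
      also have "\<dots> = poly (G a) (\<omega> ^ (s * b + j))" using a fin_S' by (simp add: sum.delta)
      finally show ?thesis .
    qed
    also have "\<dots> = 0" using full_van[OF True j] a S'_sub by auto
    finally show "(\<Sum>a'\<in>S'. (if a' = a then 1 else 0) * poly (G a') (\<omega> ^ (s * b + j))) = 0" .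
  qed (use e in auto)
  then show ?thesis unfolding dd_def w_def using True by simp
next
  case False
  show ?thesis
  proof (cases "card (Zt b) \<ge> 2")
    case True
    obtain Piv \<rho> where P: "Piv \<subseteq> S'" "card Piv = card (Zt b) - 1" "\<forall>a\<in>Piv. \<rho> a a \<noteq> 0"
      "\<forall>a\<in>Piv. \<forall>a'\<in>Piv. a' \<noteq> a \<longrightarrow> \<rho> a a' = 0"
      "\<forall>a\<in>Piv. \<forall>j<s. (\<Sum>a'\<in>S'. \<rho> a a' * poly (G a') (\<omega> ^ (s * b + j))) = 0"
      using nonfull_piv[OF False True] by blast
    have "card Piv \<le> order (\<omega> ^ (s * b + e)) (det M)"
      by (rule use_wr[OF P(1), of \<rho>]) (use P e in auto)
    then show ?thesis unfolding dd_def using False P(2) by simp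
  next
    case c: False
    then show ?thesis unfolding dd_def using False by simp
  qed
qed

end

lemma real_final:
  fixes B Z D F w r s L n0 :: real
  assumes r3: "r \<ge> 3" and sb: "s \<ge> 2 * r ^ 2" and w1: "w \<ge> 1" and wr: "w + 2 \<le> r"
    and n0: "n0 = s * B" and Bp: "B > 0" and L0: "L \<ge> 0" and Ln: "L \<le> n0"
    and hD: "(s - w + 1) * D \<le> L * w" and hF: "w * F \<le> D" 
    and hZ: "r * Z \<le> D + B + F * (r - 1 - w)" and F0: "F \<ge> 0" and D0: "D \<ge> 0"
    and ZB: "Z \<le> B"
  shows "B - Z \<ge> n0 / s * (1 - L / n0 - (1 + r ^ 2 / s) * sqrt (1 / r * (1 - L / n0)))"
proof -
  have rp: "r > 0" using r3 by simp
  have r2: "r ^ 2 \<ge> 3 * r" using r3 by (simp add: power2_eq_square)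
  have sp: "s > 0" using sb r2 r3 by linarith
  have sr: "s - r + 3 > 0" using sb r2 r3 by linarith
  have n0p: "n0 > 0" using n0 sp Bp by simp
  define \<delta> where "\<delta> = 1 - L / n0"
  have d0: "\<delta> \<ge> 0" and d1: "\<delta> \<le> 1" unfolding \<delta>_def using L0 Ln n0p by (auto simp: field_simps)
  have Leq: "L = (1 - \<delta>) * s * B" unfolding \<delta>_def using n0 n0p Bp sp by (simp add: field_simps)
  have RHS: "n0 / s * (1 - L / n0 - (1 + r ^ 2 / s) * sqrt (1 / r * (1 - L / n0)))
      = B * (\<delta> - (1 + r ^ 2 / s) * sqrt (\<delta> / r))"
    unfolding \<delta>_def using n0 sp by simp
  show ?thesis
  proof (cases "\<delta> * r \<le> 1")
    case True
    have "\<delta> / r \<le> 1 / r ^ 2" using True rp by (simp add: field_simps power2_eq_square)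
    have "\<delta> \<le> sqrt (\<delta> / r)"
    proof -
      have "\<delta> ^ 2 \<le> \<delta> / r" using True d0 rp by (simp add: field_simps power2_eq_square) (metis mult_left_le mult.commute mult.assoc)
      then show ?thesis using d0 by (simp add: real_le_rsqrt)
    qed
    moreover have "sqrt (\<delta> / r) \<le> (1 + r ^ 2 / s) * sqrt (\<delta> / r)"
    proof -
      have "0 \<le> r ^ 2 / s * sqrt (\<delta> / r)" using sp d0 rp by simp
      then show ?thesis by (simp add: algebra_simps)
    qed
    ultimately have "\<delta> - (1 + r ^ 2 / s) * sqrt (\<delta> / r) \<le> 0" by simp
    then have "B * (\<delta> - (1 + r ^ 2 / s) * sqrt (\<delta> / r)) \<le> 0" using Bp by (simp add: mult_nonneg_nonpos)
    then show ?thesis using RHS ZB by simp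
  next
    case False
    have Fb: "F * (r - 1 - w) \<le> D / w * (r - 1 - w)"
      using hF w1 wr by (intro mult_right_mono) (auto simp: field_simps)
    have "D / w * (r - 1 - w) = D / w * (r - 1) - D" using w1 by (simp add: field_simps)
    then have Z1: "r * Z \<le> B + D / w * (r - 1)" using hZ Fb by linarith
    have Dw: "D / w \<le> L / (s - w + 1)" using hD w1 wr sr by (simp add: field_simps)
    have "L / (s - w + 1) \<le> L / (s - r + 3)" using L0 wr sr by (intro divide_left_mono) auto
    then have "D / w * (r - 1) \<le> L / (s - r + 3) * (r - 1)" using Dw r3 by (intro mult_right_mono) auto
    define X where "X = (1 - \<delta>) * B * (s * (r - 1) / (s - r + 3))"
    have Z2: "r * Z \<le> B + X"
      using Z1 \<open>D / w * (r - 1) \<le> L / (s - r + 3) * (r - 1)\<close> Leq unfolding X_def by (simp add: field_simps)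
    have Z3: "Z \<le> B / r + X / r" using Z2 rp by (simp add: field_simps)
    define Y where "Y = (1 - 1 / r) * (1 - \<delta>) * (s / (s - r + 3))"
    have XY: "X / r = B * Y" unfolding X_def Y_def using rp sr by (simp add: field_simps)
    have BZ: "B - Z \<ge> B * ((1 - 1 / r) - Y)"
    proof -
      have "B * ((1 - 1 / r) - Y) = B - B / r - B * Y" by (simp add: algebra_simps)
      then show ?thesis using Z3 XY by linarith
    qed
    have "(1 - 1 / r) - Y
        = (1 - 1 / r) * \<delta> - (1 - 1 / r) * (1 - \<delta>) * ((r - 3) / (s - r + 3))"
    proof -
      define Q where "Q = (r - 3) / (s - r + 3)"
      have sQ: "s / (s - r + 3) = 1 + Q" unfolding Q_def using sr by (simp add: field_simps)
      have "(1 - 1 / r) - Y = (1 - 1 / r) - (1 - 1 / r) * (1 - \<delta>) * (1 + Q)" unfolding Y_def sQ ..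
      also have "\<dots> = (1 - 1 / r) * \<delta> - (1 - 1 / r) * (1 - \<delta>) * Q" using rp by (simp add: field_simps)
      finally show ?thesis unfolding Q_def .
    qed
    also have "\<dots> \<ge> \<delta> - \<delta> / r - (r - 3) / (s - r + 3)"
    proof -
      have a: "(1 - 1 / r) * (1 - \<delta>) \<le> 1" using d0 d1 rp r3 by (simp add: field_simps) (smt (verit) mult_le_cancel_left1 mult_nonneg_nonneg)
      have b: "(r - 3) / (s - r + 3) \<ge> 0" using r3 sr by simp
      have "(1 - 1 / r) * (1 - \<delta>) * ((r - 3) / (s - r + 3)) \<le> (r - 3) / (s - r + 3)"
        using mult_right_mono[OF a b] by simp
      moreover have "(1 - 1 / r) * \<delta> = \<delta> - \<delta> / r" by (simp add: field_simps)
      ultimately show ?thesis by linarith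
    qed
    finally have L1: "(1 - 1 / r) - Y \<ge> \<delta> - \<delta> / r - (r - 3) / (s - r + 3)" .
    have dr1: "\<delta> / r \<le> 1" using d1 r3 by (simp add: field_simps)
    have dr0: "\<delta> / r \<ge> 0" using d0 rp by simp
    have s1: "\<delta> / r \<le> sqrt (\<delta> / r)"
    proof -
      have "(\<delta> / r) * (\<delta> / r) \<le> \<delta> / r" by (rule mult_left_le[OF dr1 dr0])
      then have "(\<delta> / r) ^ 2 \<le> \<delta> / r" by (simp only: power2_eq_square)
      then show ?thesis using dr0 by (simp add: real_le_rsqrt)
    qed
    have s2: "1 / r \<le> sqrt (\<delta> / r)"
    proof -
      have "(1 / r) ^ 2 \<le> \<delta> / r" using False rp by (simp add: field_simps power2_eq_square)
      then show ?thesis by (simp add: real_le_rsqrt)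
    qed
    have s3: "(r - 3) / (s - r + 3) \<le> r / s"
    proof -
      have a: "2 * (r * r) \<le> s" using sb by (simp add: power2_eq_square)
      have "0 \<le> r * r" by simp
      then have "r * r \<le> r * 3 + s * 3" using a r3 by linarith
      then have "(r - 3) * s \<le> r * (s - r + 3)" by (simp add: algebra_simps) 
      then show ?thesis using sp sr by (simp add: field_simps)
    qed
    have s4: "r / s \<le> r ^ 2 / s * sqrt (\<delta> / r)"
    proof -
      have "r ^ 2 / s * sqrt (\<delta> / r) \<ge> r ^ 2 / s * (1 / r)"
        using s2 sp by (intro mult_left_mono) auto
      moreover have "r ^ 2 / s * (1 / r) = r / s" using rp by (simp add: power2_eq_square)
      ultimately show ?thesis by simp
    qed
    have "\<delta> - \<delta> / r - (r - 3) / (s - r + 3) \<ge> \<delta> - (1 + r ^ 2 / s) * sqrt (\<delta> / r)"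
      using s1 s3 s4 by (simp add: algebra_simps)
    with L1 have "(1 - 1 / r) - Y \<ge> \<delta> - (1 + r ^ 2 / s) * sqrt (\<delta> / r)"
      by linarith
    then have "B * ((1 - 1 / r) - Y) \<ge> B * (\<delta> - (1 + r ^ 2 / s) * sqrt (\<delta> / r))"
      using Bp by (intro mult_left_mono) auto
    then show ?thesis using BZ RHS by linarith
  qed
qed


context mainloc begin

lemma w_le_s: "w \<le> s" using w_le s_ge_r by simp

lemma sum_dd: "(s - w + 1) * (\<Sum>b<B. dd b) \<le> (l - 1) * w"
proof -
  let ?Q = "det M"
  define Ix where "Ix = {..<B} \<times> {..s - w}"
  define \<phi> where "\<phi> = (\<lambda>(b, e). \<omega> ^ (s * b + e))"
  have lt: "s * b + e < n0" if "b < B" "e < s" for b e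
  proof -
    have "s * b + e < s * b + s" using that by simp
    also have "\<dots> = s * (b + 1)" by simp
    also have "\<dots> \<le> s * B" using that by (intro mult_left_mono) auto
    finally show ?thesis using sB by simp
  qed
  have inj: "inj_on \<phi> Ix"
  proof (rule inj_onI)
    fix x y assume x: "x \<in> Ix" and y: "y \<in> Ix" and e: "\<phi> x = \<phi> y"
    obtain b1 e1 where x': "x = (b1, e1)" by fastforce
    obtain b2 e2 where y': "y = (b2, e2)" by fastforce
    have r1: "b1 < B" "e1 < s" using x x' w_le_s w_pos unfolding Ix_def by auto
    have r2: "b2 < B" "e2 < s" using y y' w_le_s w_pos unfolding Ix_def by auto
    have "s * b1 + e1 = s * b2 + e2"
      by (rule inj_onD[OF om_inj]) (use e x' y' lt r1 r2 in \<open>auto simp: \<phi>_def\<close>)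
    then have "(s * b1 + e1) div s = (s * b2 + e2) div s" "(s * b1 + e1) mod s = (s * b2 + e2) mod s" by simp_all
    then have "b1 = b2" "e1 = e2" using r1 r2 s_pos by simp_all
    then show "x = y" using x' y' by simp
  qed
  have "(\<Sum>x\<in>Ix. dd (fst x)) \<le> (\<Sum>x\<in>Ix. order (\<phi> x) ?Q)"
  proof (rule sum_mono)
    fix x assume "x \<in> Ix"
    then obtain b e where x: "x = (b, e)" "e \<le> s - w" unfolding Ix_def by auto
    then have "e + w \<le> s" using w_le_s by simp
    then show "dd (fst x) \<le> order (\<phi> x) ?Q" using dd_order x unfolding \<phi>_def by simp
  qed
  also have "\<dots> = (\<Sum>p\<in>\<phi> ` Ix. order p ?Q)" by (simp add: sum.reindex[OF inj] o_def)
  also have "\<dots> = (\<Sum>p\<in>\<phi> ` Ix \<inter> {x. poly ?Q x = 0}. order p ?Q)"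
  proof (rule sum.mono_neutral_right)
    show "finite (\<phi> ` Ix)" unfolding Ix_def by simp
    show "\<phi> ` Ix \<inter> {x. poly ?Q x = 0} \<subseteq> \<phi> ` Ix" by auto
    show "\<forall>i\<in>\<phi> ` Ix - \<phi> ` Ix \<inter> {x. poly ?Q x = 0}. order i ?Q = 0"
    proof
      fix i assume "i \<in> \<phi> ` Ix - \<phi> ` Ix \<inter> {x. poly ?Q x = 0}"
      then have "poly ?Q i \<noteq> 0" by auto
      then show "order i ?Q = 0" by (rule order_0I)
    qed
  qed
  also have "\<dots> \<le> (\<Sum>p | poly ?Q p = 0. order p ?Q)"
    by (rule sum_mono2) (use poly_roots_finite[OF M_nz] in auto)
  also have "\<dots> \<le> degree ?Q" by (rule sum_order_le_degree[OF M_nz])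
  also have "\<dots> \<le> (l - 1) * w" by (rule M_deg)
  finally have A: "(\<Sum>x\<in>Ix. dd (fst x)) \<le> (l - 1) * w" .
  have "(\<Sum>x\<in>Ix. dd (fst x)) = (\<Sum>b<B. \<Sum>e\<le>s - w. dd b)"
    unfolding Ix_def sum.cartesian_product by (rule sum.cong) auto
  also have "\<dots> = (\<Sum>b<B. (s - w + 1) * dd b)" by simp
  also have "\<dots> = (s - w + 1) * (\<Sum>b<B. dd b)" by (simp add: sum_distrib_left)
  finally show ?thesis using A by simp
qed

lemma shift_bij: "bij_betw (\<lambda>b. (b + c) mod B) {..<B} {..<B}"
proof -
  let ?p = "\<lambda>b. (b + c) mod B"
  let ?q = "\<lambda>y. (y + (B - c mod B)) mod B"
  have cm: "c mod B < B" using B_pos by simp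
  have key: "c + (B - c mod B) = B * (c div B + 1)"
  proof -
    define m where "m = c mod B"
    define k where "k = c div B"
    have e: "c = B * k + m" unfolding m_def k_def by simp
    have "m < B" using cm unfolding m_def .
    then have "c + (B - m) = B * k + B" using e by linarith
    then show ?thesis unfolding m_def k_def by simp
  qed
  have inv: "?q (?p b) = b" if "b < B" for b
  proof -
    have "?q (?p b) = (b + c + (B - c mod B)) mod B" by (simp add: mod_add_left_eq)
    also have "b + c + (B - c mod B) = b + B * (c div B + 1)" by (simp only: add.assoc key)
    also have "(b + B * (c div B + 1)) mod B = b mod B" by (rule mod_mult_self2)
    also have "b mod B = b" using that by simp
    finally show ?thesis .
  qed
  have inj: "inj_on ?p {..<B}" by (rule inj_on_inverseI[where g = ?q]) (use inv in auto)
  have sub: "?p ` {..<B} \<subseteq> {..<B}" using B_pos by auto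
  have "?p ` {..<B} = {..<B}" by (rule endo_inj_surj[OF _ sub inj]) simp
  then show ?thesis using inj by (simp add: bij_betw_def)
qed

lemma count_Zt: "(\<Sum>b<B. card (Zt b)) = r * card {b. b < B \<and> zb b}"
proof -
  have c1: "card (Zt b) = (\<Sum>t<r. if zb ((b + t * h) mod B) then 1 else 0)" for b
  proof -
    have "Zt b = {t \<in> {..<r}. zb ((b + t * h) mod B)}" unfolding Zt_def by auto
    then have "card (Zt b) = (\<Sum>t\<in>{t \<in> {..<r}. zb ((b + t * h) mod B)}. 1)" by simp
    also have "\<dots> = (\<Sum>t<r. if zb ((b + t * h) mod B) then 1 else 0)" by (rule sum.inter_filter) simp
    finally show ?thesis .
  qed
  have c2: "(\<Sum>b<B. (if zb ((b + c) mod B) then 1 else 0)) = card {b. b < B \<and> zb b}" for c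
  proof -
    have "(\<Sum>b<B. (if zb ((b + c) mod B) then 1 else 0)) = (\<Sum>b<B. (if zb b then 1 else (0::nat)))"
      by (rule sum.reindex_bij_betw[OF shift_bij, of "\<lambda>b. if zb b then 1 else 0"])
    also have "\<dots> = (\<Sum>b\<in>{b \<in> {..<B}. zb b}. 1)" by (rule sum.inter_filter[symmetric]) simp
    also have "\<dots> = card {b. b < B \<and> zb b}" by simp
    finally show ?thesis .
  qed
  have "(\<Sum>b<B. card (Zt b)) = (\<Sum>b<B. \<Sum>t<r. if zb ((b + t * h) mod B) then 1 else 0)"
    using c1 by simp
  also have "\<dots> = (\<Sum>t<r. \<Sum>b<B. if zb ((b + t * h) mod B) then 1 else 0)" by (rule sum.swap)
  also have "\<dots> = (\<Sum>t<r. card {b. b < B \<and> zb b})" using c2 by simp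
  finally show ?thesis by simp
qed

lemma fw: "folded_weight \<omega> s (ev f) = B - card {b. b < B \<and> zb b}"
proof -
  have "{i. i < (card (UNIV::'a set) - 1) div s \<and> (\<exists>j<s. ev f (\<omega> ^ (s * i + j)) \<noteq> 0)}
      = {..<B} - {b. b < B \<and> zb b}"
    unfolding B_def n0_def zb_def ev_def using om_nz by auto
  moreover have "card ({..<B} - {b. b < B \<and> zb b}) = B - card {b. b < B \<and> zb b}"
    by (subst card_Diff_subset) auto
  ultimately show ?thesis unfolding folded_weight_def by simp
qed

lemma main_bound:
  "real (folded_weight \<omega> s (ev f)) \<ge>
       (real (card (UNIV::'a set)) - 1) / real s *
        (1 - (real l - 1) / (real (card (UNIV::'a set)) - 1)
           - (1 + real r ^ 2 / real s) * sqrt (1 / real r * (1 - (real l - 1) / (real (card (UNIV::'a set)) - 1))))"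
proof -
  define Z where "Z = card {b. b < B \<and> zb b}"
  define D where "D = (\<Sum>b<B. dd b)"
  define Fs where "Fs = {b \<in> {..<B}. Zt b = {..<r}}"
  define F where "F = card Fs"
  have ZB: "Z \<le> B"
  proof -
    have "card {b. b < B \<and> zb b} \<le> card {..<B}" by (rule card_mono) auto
    then show ?thesis unfolding Z_def by simp
  qed
  have hD: "(s - w + 1) * D \<le> (l - 1) * w" unfolding D_def by (rule sum_dd)
  have hF: "w * F \<le> D"
  proof -
    have "w * F = (\<Sum>b\<in>Fs. dd b)" unfolding F_def Fs_def dd_def by simp
    also have "\<dots> \<le> D" unfolding D_def by (rule sum_mono2) (auto simp: Fs_def)
    finally show ?thesis .
  qed
  have hZ: "r * Z \<le> D + B + F * (r - 1 - w)"
  proof -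
    have "r * Z = (\<Sum>b<B. card (Zt b))" unfolding Z_def by (rule count_Zt[symmetric])
    also have "\<dots> \<le> (\<Sum>b<B. dd b + 1 + (if Zt b = {..<r} then r - 1 - w else 0))"
    proof (rule sum_mono)
      fix b
      show "card (Zt b) \<le> dd b + 1 + (if Zt b = {..<r} then r - 1 - w else 0)"
        using w_le unfolding dd_def by auto
    qed
    also have "\<dots> = D + B + (\<Sum>b<B. if Zt b = {..<r} then r - 1 - w else 0)"
      unfolding D_def sum.distrib by simp
    also have "(\<Sum>b<B. if Zt b = {..<r} then r - 1 - w else 0) = (\<Sum>b\<in>Fs. r - 1 - w)"
      unfolding Fs_def by (rule sum.inter_filter[symmetric]) simp
    also have "\<dots> = F * (r - 1 - w)" unfolding F_def by simp
    finally show ?thesis .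
  qed
  have q1: "real (card (UNIV::'a set)) - 1 = real n0" unfolding n0_def using n0_pos unfolding n0_def by simp
  have n0sB: "real n0 = real s * real B" using sB by (metis of_nat_mult)
  have Bp: "real B > 0" using B_pos by simp
  have rD: "(real s - real w + 1) * real D \<le> (real l - 1) * real w"
  proof -
    have "real ((s - w + 1) * D) \<le> real ((l - 1) * w)" using hD by (simp only: of_nat_le_iff)
    then have X: "real D + (real s - real w) * real D \<le> (real l - 1) * real w"
      using w_le_s l1 by (simp add: of_nat_diff)
    have "(real s - real w + 1) * real D = real D + (real s - real w) * real D" by (simp add: algebra_simps)
    then show ?thesis using X by linarith
  qed
  have rF: "real w * real F \<le> real D" using hF by (metis of_nat_le_iff of_nat_mult)
  have rZ: "real r * real Z \<le> real D + real B + real F * (real r - 1 - real w)"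
  proof -
    have "real (r * Z) \<le> real (D + B + F * (r - 1 - w))" using hZ by (simp only: of_nat_le_iff)
    then have X: "real r * real Z \<le> real D + real B + real F * (real r - (1 + real w))"
      using w_le by (simp add: of_nat_diff)
    then show ?thesis by (simp only: diff_diff_eq)
  qed
  have L0: "real l - 1 \<ge> 0" using l1 by simp
  have Ln: "real l - 1 \<le> real n0" using ln0 l1 unfolding n0_def by simp
  have "real B - real Z \<ge> real n0 / real s * (1 - (real l - 1) / real n0 - (1 + real r ^ 2 / real s) * sqrt (1 / real r * (1 - (real l - 1) / real n0)))"
  proof (rule real_final)
    show "real r \<ge> 3" using r3 by simp
    show "real s \<ge> 2 * real r ^ 2" using sbig by (metis of_nat_le_iff of_nat_mult of_nat_numeral of_nat_power)
    show "real w \<ge> 1" using w_pos by simp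
    show "real w + 2 \<le> real r" using w_le by simp
  qed (use n0sB Bp L0 Ln rD rF rZ ZB in auto)
  moreover have "real (folded_weight \<omega> s (ev f)) = real B - real Z" using fw ZB unfolding Z_def by (simp add: of_nat_diff)
  ultimately show ?thesis using q1 by simp
qed

end

theorem corollary6p4:
  fixes \<omega> :: "'a::{finite,field}" and q r l s :: nat
  assumes "q = card (UNIV :: 'a set)"
    and "prime r" and "r dvd (q - 1)" and "r \<ge> 3"
    and "real q / 2 \<le> real l" and "l \<le> q - 1"
    and "s dvd (q - 1) div r"
    and sparse: "\<And>f :: 'a poly. f \<noteq> 0 \<Longrightarrow> degree f < r \<Longrightarrow>
        poly_sparsity f + card {x. x \<noteq> 0 \<and> x ^ r = 1 \<and> poly f x \<noteq> 0} \<ge> r + 1"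
    and "s \<ge> 2 * r ^ 2"
    and "is_generator \<omega>"
  shows "\<forall>c \<in> tb_code r l - dual_code (tb_code r l :: ('a \<Rightarrow> 'a) set).
     real (folded_weight \<omega> s c) \<ge>
       (real q - 1) / real s *
        (1 - (real l - 1) / (real q - 1)
           - (1 + real r ^ 2 / real s) * sqrt (1 / real r * (1 - (real l - 1) / (real q - 1))))"
proof
  fix c :: "'a \<Rightarrow> 'a"
  assume c: "c \<in> tb_code r l - dual_code (tb_code r l :: ('a \<Rightarrow> 'a) set)"
  then obtain f :: "'a poly" where cf: "c = ev f"
    and fS: "\<forall>i. coeff f i \<noteq> 0 \<longrightarrow> i \<in> tb_index_set (card (UNIV :: 'a set)) r l"
    unfolding tb_code_def by blast
  interpret tb: tbsetup \<omega> r
    by unfold_locales (use assms in auto)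
  have Snz: "\<exists>a<r. a \<noteq> 1 \<and> cls r a f \<noteq> 0"
  proof (rule ccontr)
    assume "\<not> (\<exists>a<r. a \<noteq> 1 \<and> cls r a f \<noteq> 0)"
    then have z: "\<And>a. a < r \<Longrightarrow> a \<noteq> 1 \<Longrightarrow> cls r a f = 0" by blast
    have "\<And>i. coeff f i \<noteq> 0 \<Longrightarrow> i mod r = 1"
    proof -
      fix i assume nz: "coeff f i \<noteq> 0"
      have "coeff (cls r (i mod r) f) i = coeff f i" by (simp add: coeff_cls)
      then have "cls r (i mod r) f \<noteq> 0" using nz by auto
      moreover have "i mod r < r" using tb.r_pos by simp
      ultimately show "i mod r = 1" using z by blast
    qed
    then have "ev f \<in> dual_code (tb_code r l :: ('a \<Rightarrow> 'a) set)"
      using tb.dual_of_class1 fS by blast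
    then show False using c cf by simp
  qed
  have q2: "q \<ge> 2"
  proof -
    have "card {0::'a, 1} \<le> card (UNIV :: 'a set)" by (rule card_mono) auto
    then show ?thesis using assms(1) by simp
  qed
  have l1: "l \<ge> 1" using assms(5) q2 by linarith
  interpret ml: mainloc \<omega> r s l f
    by unfold_locales (use assms fS Snz l1 in auto)
  show "real (folded_weight \<omega> s c) \<ge>
       (real q - 1) / real s *
        (1 - (real l - 1) / (real q - 1)
           - (1 + real r ^ 2 / real s) * sqrt (1 / real r * (1 - (real l - 1) / (real q - 1))))"
    using ml.main_bound unfolding cf assms(1) .
qed

end
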